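(* Let $k,n$ be non-negative integers and $m\in\{0,1\}$. Let $p_1,\dots,p_{k+1}$ be primes (not necessarily distinct) with each $p_i\equiv 3,5,$ or $7\pmod 8$. Then for every integer $j$ not divisible by $p_{k+1}$, $$\mathcal{J}^*_{6}\Big(3^m p_1^2p_2^2\cdots p_k^2\,p_{k+1}\,\big(8p_{k+1}n+8j+p_{k+1}\big)\Big)\equiv 0\pmod 2.$$
   Context: Let $q=e^{2\pi i\tau}$, $(a;q)_\infty=\prod_{j\ge0}(1-aq^j)$, and $\eta(\tau)=q^{1/24}(q;q)_\infty$. Define $$j_6^{*}(\tau)=\left(\frac{\eta(\tau)\eta(3\tau)}{\eta(2\tau)\eta(6\tau)}\right)^6+6+2^6\left(\frac{\eta(2\tau)\eta(6\tau)}{\eta(\tau)\eta(3\tau)}\right)^6 = \frac1q+\sum_{n\ge 0}\mathcal{J}^*_6(n)q^n.$$ *)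

theory Defs
  imports "HOL-Computational_Algebra.Formal_Power_Series"
begin

text \<open>The q-Pochhammer symbol (q^a;q^a)_infinity = prod_{j>=0} (1 - q^(a(j+1))) as a formal
  power series in q.  Its N-th coefficient only depends on the factors with a(j+1) <= N,
  so it is the N-th coefficient of the finite product over j < N+1.\<close>
definition qpoch :: "nat \<Rightarrow> rat fps" where
  "qpoch a = Abs_fps (\<lambda>N. fps_nth (\<Prod>j<N+1. 1 - fps_X ^ (a * (j + 1))) N)"

text \<open>P = (q;q)(q^3;q^3) / ((q^2;q^2)(q^6;q^6)), so that
  (eta(tau)eta(3tau)/(eta(2tau)eta(6tau)))^6 = q^(-1) P^6.\<close>
definition Pfps :: "rat fps" where
  "Pfps = qpoch 1 * qpoch 3 * inverse (qpoch 2 * qpoch 6)"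

text \<open>Coefficient of q^N (N any integer) in
  j6*(tau) = q^(-1) P^6 + 6 + 64 q P^(-6).  For N >= 0 this is J*_6(N).\<close>
definition Jstar6 :: "int \<Rightarrow> rat" where
  "Jstar6 N = (if N < -1 then 0 else
      fps_nth (Pfps ^ 6) (nat (N + 1))
      + (if N = 0 then 6 else 0)
      + (if N \<ge> 1 then 64 * fps_nth (inverse Pfps ^ 6) (nat (N - 1)) else 0))"

end

theory Submission
  imports Defs "HOL-Library.Z2"
begin



unbundle fps_syntax
declare add_bit_eq_xor[simp del] mult_bit_eq_and[simp del]

definition eqto :: "nat \<Rightarrow> 'a::comm_ring_1 fps \<Rightarrow> 'a fps \<Rightarrow> bool" where
  "eqto d f g \<longleftrightarrow> (\<forall>i\<le>d. f$i = g$i)"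

lemma eqto_refl[simp]: "eqto d f f" by (simp add: eqto_def)
lemma eqto_sym: "eqto d f g \<Longrightarrow> eqto d g f" by (simp add: eqto_def)
lemma eqto_trans: "eqto d f g \<Longrightarrow> eqto d g h \<Longrightarrow> eqto d f h" by (simp add: eqto_def)
lemma eqto_mono: "d' \<le> d \<Longrightarrow> eqto d f g \<Longrightarrow> eqto d' f g" by (simp add: eqto_def)
lemma eqto_add: "eqto d a b \<Longrightarrow> eqto d c e \<Longrightarrow> eqto d (a+c) (b+e)" by (simp add: eqto_def)
lemma eqto_mult: "eqto d a b \<Longrightarrow> eqto d c e \<Longrightarrow> eqto d (a*c) (b*e)"
  unfolding eqto_def fps_mult_nth by (auto intro!: sum.cong)
lemma eqto_all: "(\<And>d. eqto d f g) \<Longrightarrow> f = g"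
  by (auto simp: eqto_def intro!: fps_ext)

lemma eqto_sum: "(\<And>j. j \<in> S \<Longrightarrow> eqto d (g j) (h j)) \<Longrightarrow> eqto d (\<Sum>j\<in>S. g j) (\<Sum>j\<in>S. h j)"
  by (induct S rule: infinite_finite_induct) (auto intro: eqto_add)

lemma eqto_prod: "(\<And>j. j \<in> S \<Longrightarrow> eqto d (g j) (h j)) \<Longrightarrow> eqto d (\<Prod>j\<in>S. g j) (\<Prod>j\<in>S. h j)"
  by (induct S rule: infinite_finite_induct) (auto intro: eqto_mult)

lemma eqto_Xpow: "d < m \<Longrightarrow> eqto d (1 + fps_X^m) 1"
  by (auto simp: eqto_def)

lemma eqto_Xpow_mult0: "d < m \<Longrightarrow> eqto d (fps_X^m * f) 0"
  by (auto simp: eqto_def fps_X_power_mult_nth)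

lemma eqto_cancel:
  fixes a b c :: "'a::field fps"
  assumes "eqto d (a*c) (b*c)" "c$0 \<noteq> 0"
  shows "eqto d a b"
proof -
  have "eqto d (a*c*inverse c) (b*c*inverse c)" by (rule eqto_mult[OF assms(1) eqto_refl])
  moreover have "a*c*inverse c = a" "b*c*inverse c = b" using inverse_mult_eq_1'[OF assms(2)]
    by (simp_all add: mult.assoc)
  ultimately show ?thesis by simp
qed

lemma bit_fps_two[simp]: "(2::bit fps) = 0"
  by (rule fps_ext) (simp add: fps_numeral_nth)

lemma bit_fps_sq: "((a::bit fps) + b)^2 = a^2 + b^2"
  by (simp add: power2_sum)

definition T :: "nat \<Rightarrow> nat \<Rightarrow> bit fps" where
  "T k K = (\<Prod>j<K. 1 + fps_X^(k*(j+1)))"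

definition Ef :: "nat \<Rightarrow> bit fps" where
  "Ef k = Abs_fps (\<lambda>N. T k (N+1) $ N)"

lemma eqto_T: assumes "1 \<le> k" "N < K" "K \<le> K'" shows "eqto N (T k K') (T k K)"
proof -
  have "T k K' = T k K * (\<Prod>j\<in>{K..<K'}. 1 + fps_X^(k*(j+1)))"
    unfolding T_def using assms(3)
    by (metis lessThan_atLeast0 prod.atLeastLessThan_concat zero_le)
  moreover have "eqto N (\<Prod>j\<in>{K..<K'}. 1 + fps_X^(k*(j+1))) (\<Prod>j\<in>{K..<K'}. 1)"
  proof (rule eqto_prod, rule eqto_Xpow)
    fix j assume "j \<in> {K..<K'}"
    then have "N < j+1" using assms by auto
    also have "j+1 \<le> k*(j+1)" using mult_le_mono1[of 1 k "j+1"] assms by simp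
    finally show "N < k*(j+1)" .
  qed
  ultimately show ?thesis using eqto_mult[OF eqto_refl[of N "T k K"]] by fastforce
qed

lemma eqto_Ef: assumes "1 \<le> k" "N < K" shows "eqto N (Ef k) (T k K)"
  unfolding eqto_def
proof (intro allI impI)
  fix i assume "i \<le> N"
  have "eqto i (T k K) (T k (i+1))" using assms \<open>i \<le> N\<close> by (intro eqto_T) auto
  then show "Ef k $ i = T k K $ i" by (simp add: Ef_def eqto_def)
qed

lemma T_double: "T (2*k) K = T k K ^ 2"
  unfolding T_def prod_power_distrib by (intro prod.cong) (auto simp: bit_fps_sq power_mult[symmetric] mult.commute mult.left_commute)

lemma Ef_double: assumes "1 \<le> k" shows "Ef (2*k) = Ef k ^ 2"
proof (rule eqto_all)
  fix d
  have "eqto d (Ef (2*k)) (T (2*k) (d+1))" using assms by (intro eqto_Ef) auto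
  moreover have "eqto d (Ef k ^2) (T k (d+1)^2)" unfolding power2_eq_square
    using assms by (intro eqto_mult eqto_Ef) auto
  ultimately show "eqto d (Ef (2*k)) (Ef k ^ 2)" by (metis T_double eqto_sym eqto_trans)
qed




definition intfps :: "rat fps \<Rightarrow> bool" where
  "intfps f \<longleftrightarrow> (\<forall>n. f$n \<in> \<int>)"

definition red :: "rat fps \<Rightarrow> bit fps" where
  "red f = Abs_fps (\<lambda>n. of_int \<lfloor>f$n\<rfloor>)"

lemma intfps_coeff: "intfps f \<Longrightarrow> f$n = of_int \<lfloor>f$n\<rfloor>"
  unfolding intfps_def by (metis Ints_cases floor_of_int)

lemma intfps_1[simp]: "intfps 1" by (auto simp: intfps_def)
lemma intfps_Xpow[simp]: "intfps (fps_X^m)" by (auto simp: intfps_def)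
lemma intfps_add: "intfps f \<Longrightarrow> intfps g \<Longrightarrow> intfps (f+g)" by (auto simp: intfps_def)
lemma intfps_diff: "intfps f \<Longrightarrow> intfps g \<Longrightarrow> intfps (f-g)" by (auto simp: intfps_def)
lemma intfps_mult: "intfps f \<Longrightarrow> intfps g \<Longrightarrow> intfps (f*g)"
  unfolding intfps_def fps_mult_nth by (auto intro!: Ints_sum Ints_mult)
lemma intfps_prod: "(\<And>j. j\<in>S \<Longrightarrow> intfps (g j)) \<Longrightarrow> intfps (\<Prod>j\<in>S. g j)"
  by (induct S rule: infinite_finite_induct) (auto intro: intfps_mult)
lemma intfps_power: "intfps f \<Longrightarrow> intfps (f^n)"
  by (induct n) (auto intro: intfps_mult)

lemma red_nth: "red f $ n = of_int \<lfloor>f$n\<rfloor>" by (simp add: red_def)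

lemma red_1[simp]: "red 1 = 1" by (rule fps_ext) (simp add: red_nth)
lemma red_Xpow: "red (1 - fps_X^m) = 1 + fps_X^m"
  by (rule fps_ext) (simp add: red_nth)

lemma red_mult: assumes "intfps f" "intfps g" shows "red (f*g) = red f * red g"
proof (rule fps_ext)
  fix n
  have "(f*g)$n = of_int (\<Sum>i=0..n. \<lfloor>f$i\<rfloor> * \<lfloor>g$(n-i)\<rfloor>)"
    unfolding fps_mult_nth of_int_sum of_int_mult
    using intfps_coeff[OF assms(1)] intfps_coeff[OF assms(2)] by (intro sum.cong) auto
  then have "red (f*g) $ n = (of_int (\<Sum>i=0..n. \<lfloor>f$i\<rfloor> * \<lfloor>g$(n-i)\<rfloor>) :: bit)"
    by (simp only: red_nth floor_of_int)
  also have "\<dots> = (red f * red g) $ n"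
    by (simp only: of_int_sum of_int_mult red_nth fps_mult_nth)
  finally show "red (f*g) $ n = (red f * red g) $ n" .
qed

lemma red_prod: "(\<And>j. j\<in>S \<Longrightarrow> intfps (g j)) \<Longrightarrow> red (\<Prod>j\<in>S. g j) = (\<Prod>j\<in>S. red (g j))"
proof (induct S rule: infinite_finite_induct)
  case (insert x F)
  then show ?case by (simp add: red_mult intfps_prod)
qed auto

lemma red_power: "intfps f \<Longrightarrow> red (f^n) = red f ^ n"
  by (induct n) (auto simp: red_mult intfps_power)

lemma intfps_inverse: assumes "intfps f" "f$0 = 1" shows "intfps (inverse f)"
proof -
  let ?g = "inverse f"
  have fg: "f * ?g = 1" using assms(2) by (simp add: inverse_mult_eq_1')
  have "?g $ n \<in> \<int>" for n
  proof (induct n rule: less_induct)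
    case (less n)
    show ?case
    proof (cases n)
      case 0 then show ?thesis using assms(2) by simp
    next
      case (Suc m)
      have "(f * ?g) $ n = 0" using fg Suc by simp
      then have "(\<Sum>i=0..n. f$i * ?g$(n-i)) = 0" by (simp add: fps_mult_nth)
      moreover have "(\<Sum>i=0..n. f$i * ?g$(n-i)) = f$0 * ?g$n + (\<Sum>i=1..n. f$i * ?g$(n-i))"
        by (simp add: sum.atLeast_Suc_atMost Suc)
      ultimately have "?g$n = - (\<Sum>i=1..n. f$i * ?g$(n-i))" using assms(2) by simp
      moreover have "(\<Sum>i=1..n. f$i * ?g$(n-i)) \<in> \<int>"
        using assms(1) less by (intro Ints_sum Ints_mult) (auto simp: intfps_def)
      ultimately show ?thesis by simp
    qed
  qed
  then show ?thesis by (simp add: intfps_def)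
qed

lemma red_inverse: assumes "intfps f" "f$0 = 1" shows "red (inverse f) = inverse (red f)"
proof -
  have "red f * red (inverse f) = red (f * inverse f)"
    using assms by (simp add: red_mult intfps_inverse)
  also have "\<dots> = 1" using assms(2) by (simp add: inverse_mult_eq_1')
  finally show ?thesis by (rule fps_inverse_unique[symmetric])
qed

lemma red_nth0: "intfps f \<Longrightarrow> f$0 = 1 \<Longrightarrow> red f $ 0 = 1"
  by (simp add: red_nth)

lemma intfps_qpoch: "intfps (qpoch a)"
proof -
  have "intfps (\<Prod>j<N+1. 1 - fps_X ^ (a * (j + 1)) :: rat fps)" for N
    by (intro intfps_prod intfps_diff) auto
  then show ?thesis unfolding intfps_def qpoch_def by simp
qed

lemma red_qpoch: "red (qpoch a) = Ef a"
proof (rule fps_ext)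
  fix N
  have "red (qpoch a) $ N = red (\<Prod>j<N+1. 1 - fps_X ^ (a * (j + 1)) :: rat fps) $ N"
    by (simp add: red_nth qpoch_def)
  also have "red (\<Prod>j<N+1. 1 - fps_X ^ (a * (j + 1)) :: rat fps) = T a (N+1)"
    unfolding T_def by (subst red_prod) (auto intro!: intfps_diff simp: red_Xpow)
  finally show "red (qpoch a) $ N = Ef a $ N" by (simp add: Ef_def)
qed

lemma qpoch_0: "qpoch a $ 0 = 1" if "a \<ge> 1"
  using that by (simp add: qpoch_def)




lemma bit_fps_add_self[simp]: "(x::bit fps) + x = 0"
  by (metis bit_fps_two mult_2 mult_zero_left)

fun qb :: "bit fps \<Rightarrow> nat \<Rightarrow> nat \<Rightarrow> bit fps" where
  "qb Q 0 i = (if i = 0 then 1 else 0)"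
| "qb Q (Suc N) i = (if i = 0 then 1 else qb Q N i + Q^(Suc N - i) * qb Q N (i - 1))"

lemma qb_zero: "N < i \<Longrightarrow> qb Q N i = 0"
  by (induct N arbitrary: i) auto

lemma qb_0[simp]: "qb Q N 0 = 1" by (cases N) auto

fun tri :: "nat \<Rightarrow> nat" where
  "tri 0 = 0" | "tri (Suc i) = tri i + Suc i"

lemma cauchy: "(\<Prod>i<N. y + Q^(i+1)) = (\<Sum>i\<le>N. qb Q N i * Q^(tri i) * y^(N-i))"
proof (induct N)
  case 0 then show ?case by simp
next
  case (Suc N)
  let ?h = "\<lambda>i. qb Q N i * Q^(tri i) * y^(N-i)"
  have A: "(\<Sum>i\<le>Suc N. qb Q (Suc N) i * Q^(tri i) * y^(Suc N-i))
     = y^(Suc N) + (\<Sum>l\<le>N. qb Q N (Suc l) * Q^(tri (Suc l)) * y^(N-l) + Q^(Suc N) * ?h l)"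
  proof -
    have "(\<Sum>i\<le>Suc N. qb Q (Suc N) i * Q^(tri i) * y^(Suc N-i))
        = y^(Suc N) + (\<Sum>l\<le>N. qb Q (Suc N) (Suc l) * Q^(tri (Suc l)) * y^(Suc N - Suc l))"
      by (subst sum.atMost_Suc_shift) simp
    also have "(\<Sum>l\<le>N. qb Q (Suc N) (Suc l) * Q^(tri (Suc l)) * y^(Suc N - Suc l))
       = (\<Sum>l\<le>N. qb Q N (Suc l) * Q^(tri (Suc l)) * y^(N-l) + Q^(Suc N) * ?h l)"
    proof (intro sum.cong refl)
      fix l assume "l \<in> {..N}"
      then have "Suc N - Suc l + tri (Suc l) = Suc N + tri l" by auto
      then have "Q^(Suc N - Suc l) * Q^(tri (Suc l)) = Q^(Suc N) * Q^(tri l)"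
        by (simp add: power_add[symmetric])
      then show "qb Q (Suc N) (Suc l) * Q^(tri (Suc l)) * y^(Suc N - Suc l)
          = qb Q N (Suc l) * Q^(tri (Suc l)) * y^(N-l) + Q^(Suc N) * ?h l"
        by (simp add: algebra_simps) (metis mult.assoc mult.commute)
    qed
    finally show ?thesis .
  qed
  have B: "y * (\<Sum>i\<le>N. ?h i) = y^(Suc N) + (\<Sum>l\<le>N. qb Q N (Suc l) * Q^(tri (Suc l)) * y^(N-l))"
  proof -
    have "y * (\<Sum>i\<le>N. ?h i) = (\<Sum>i\<le>N. qb Q N i * Q^(tri i) * y^(Suc N-i))"
      unfolding sum_distrib_left by (intro sum.cong refl) (auto simp: Suc_diff_le algebra_simps)
    also have "\<dots> = (\<Sum>i\<le>Suc N. qb Q N i * Q^(tri i) * y^(Suc N-i))"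
      by (simp add: qb_zero)
    also have "\<dots> = y^(Suc N) + (\<Sum>l\<le>N. qb Q N (Suc l) * Q^(tri (Suc l)) * y^(N-l))"
      by (subst sum.atMost_Suc_shift) simp
    finally show ?thesis .
  qed
  have "(\<Prod>i<Suc N. y + Q^(i+1)) = (\<Sum>i\<le>N. ?h i) * (y + Q^(Suc N))"
    using Suc by simp
  also have "\<dots> = y * (\<Sum>i\<le>N. ?h i) + Q^(Suc N) * (\<Sum>i\<le>N. ?h i)"
    by (simp add: algebra_simps)
  also have "\<dots> = y^(Suc N) + (\<Sum>l\<le>N. qb Q N (Suc l) * Q^(tri (Suc l)) * y^(N-l)) + Q^(Suc N) * (\<Sum>i\<le>N. ?h i)"
    by (simp only: B)
  also have "\<dots> = (\<Sum>i\<le>Suc N. qb Q (Suc N) i * Q^(tri i) * y^(Suc N-i))"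
    unfolding A sum.distrib sum_distrib_left by (simp only: add.assoc)
  finally show ?case .
qed

definition PQ :: "bit fps \<Rightarrow> nat \<Rightarrow> bit fps" where
  "PQ Q m = (\<Prod>l<m. 1 + Q^(l+1))"

lemma PQ_Suc: "PQ Q (Suc m) = PQ Q m * (1 + Q^(Suc m))"
  by (simp add: PQ_def)

lemma qb_prod: "i \<le> N \<Longrightarrow> qb Q N i * PQ Q i * PQ Q (N-i) = PQ Q N"
proof (induct N arbitrary: i)
  case 0 then show ?case by (simp add: PQ_def)
next
  case (Suc N)
  show ?case
  proof (cases i)
    case 0 then show ?thesis by (simp add: PQ_def)
  next
    case (Suc l)
    with Suc.prems have l: "l \<le> N" by simp
    have T1: "qb Q N (Suc l) * PQ Q (Suc l) * PQ Q (N-l) = PQ Q N * (1 + Q^(N-l))"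
    proof (cases "l < N")
      case True
      have e: "N - l = Suc (N - Suc l)" using True by simp
      have "qb Q N (Suc l) * PQ Q (Suc l) * PQ Q (N - Suc l) = PQ Q N"
        using Suc.hyps True by simp
      have "PQ Q (N-l) = PQ Q (N - Suc l) * (1 + Q^(N-l))" using PQ_Suc[of Q "N - Suc l"] e by simp
      then have "qb Q N (Suc l) * PQ Q (Suc l) * PQ Q (N-l) = (qb Q N (Suc l) * PQ Q (Suc l) * PQ Q (N - Suc l)) * (1 + Q^(N-l))"
        by (simp only: mult.assoc)
      then show ?thesis using \<open>qb Q N (Suc l) * PQ Q (Suc l) * PQ Q (N - Suc l) = PQ Q N\<close> by simp
    next
      case False
      then have "l = N" using l by simp
      then show ?thesis by (simp add: qb_zero)
    qed
    have T2: "Q^(N-l) * qb Q N l * (PQ Q l * (1 + Q^(Suc l))) * PQ Q (N-l)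
        = Q^(N-l) * (1 + Q^(Suc l)) * PQ Q N"
    proof -
      have "Q^(N-l) * qb Q N l * (PQ Q l * (1 + Q^(Suc l))) * PQ Q (N-l)
         = Q^(N-l) * (1 + Q^(Suc l)) * (qb Q N l * PQ Q l * PQ Q (N-l))" by (simp only: ac_simps)
      then show ?thesis using Suc.hyps[OF l] by simp
    qed
    have e2: "Q^(N-l) * Q^(Suc l) = Q^(Suc N)" using l by (simp add: power_add[symmetric])
    have "qb Q (Suc N) i * PQ Q i * PQ Q (Suc N - i)
        = qb Q N (Suc l) * PQ Q (Suc l) * PQ Q (N-l)
          + Q^(N-l) * qb Q N l * (PQ Q l * (1 + Q^(Suc l))) * PQ Q (N-l)"
      using Suc by (simp add: PQ_Suc algebra_simps)
    also have "\<dots> = PQ Q N * (1 + Q^(N-l)) + Q^(N-l) * (1 + Q^(Suc l)) * PQ Q N"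
      unfolding T1 T2 ..
    also have "\<dots> = PQ Q N * (1 + (Q^(N-l) + Q^(N-l)) + Q^(N-l) * Q^(Suc l))"
      by (simp add: algebra_simps)
    also have "\<dots> = PQ Q (Suc N)" unfolding e2 PQ_Suc by simp
    finally show ?thesis .
  qed
qed



unbundle fps_syntax
lemma quad_pos: "(j::int) \<noteq> 0 \<Longrightarrow> \<bar>j\<bar> \<le> 2*j^2 - j"
proof (cases "j > 0")
  case True
  then have "j*1 \<le> j*j" by (intro mult_left_mono) auto
  then show ?thesis using True by (simp add: power2_eq_square)
next
  case False
  have "0 \<le> j*j" by simp
  then show ?thesis using False by (simp add: power2_eq_square)
qed

lemma quad_nonneg: "0 \<le> 2*(j::int)^2 - j"
  using quad_pos[of j] by (cases "j = 0") auto

lemma quad_inj: "2*(a::int)^2 - a = 2*b^2 - b \<Longrightarrow> a = b"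
proof -
  assume h: "2*a^2 - a = 2*b^2 - b"
  have "(a-b)*(2*a+2*b-1) = 0" using h by (simp add: algebra_simps power2_eq_square)
  moreover have "2*a+2*b-1 \<noteq> 0" by presburger
  ultimately show "a = b" by simp
qed
definition tr :: "nat \<Rightarrow> bool" where "tr t \<longleftrightarrow> (\<exists>j::int. int t = 2*j^2 - j)"

definition psi :: "nat \<Rightarrow> bit fps" where
  "psi k = Abs_fps (\<lambda>m. of_bool (k dvd m \<and> tr (m div k)))"

definition L :: "nat \<Rightarrow> nat \<Rightarrow> bit fps" where
  "L k n = (\<Prod>m<2*n. 1 + fps_X^(k*(2*m+1)))"

definition G :: "nat \<Rightarrow> nat \<Rightarrow> nat" where
  "G n i = nat (2*(int i - int n)^2 - (int i - int n))"

lemma prod_split2: "(\<Prod>j<2*M. g (j::nat)) = (\<Prod>m<M. g (2*m)) * (\<Prod>m<M. (g (2*m+1)::'a::comm_monoid_mult))"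
  by (induct M) (simp_all add: ac_simps)

lemma prod_add_split: "(\<Prod>i<n+m. f (i::nat)) = (\<Prod>i<n. f i) * (\<Prod>i<m. (f (n+i)::'a::comm_monoid_mult))"
  by (induct m) (simp_all add: ac_simps)

lemma T_split: "T k (4*n) = L k n * T (2*k) (2*n)"
proof -
  have "T k (2*(2*n)) = (\<Prod>m<2*n. 1 + fps_X^(k*(2*m+1))) * (\<Prod>m<2*n. 1 + fps_X^(k*(2*m+1+1)))"
    unfolding T_def by (rule prod_split2)
  moreover have "(\<Prod>m<2*n. (1::bit fps) + fps_X^(k*(2*m+1+1))) = T (2*k) (2*n)"
    unfolding T_def by (intro prod.cong refl) (simp add: algebra_simps)
  ultimately have A: "T k (2*(2*n)) = L k n * T (2*k) (2*n)" unfolding L_def by simp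
  have e: "(4::nat)*n = 2*(2*n)" by simp
  show ?thesis unfolding e by (rule A)
qed


lemma two_tri: "2 * tri i = i * (i+1)"
  by (induct i) auto

lemma prod_Xpow: "(\<Prod>i<n. (fps_X::bit fps)^(4*k*(i+1))) = fps_X^(2*k*(n*(n+1)))"
proof (induct n)
  case (Suc n)
  have "2*k*(n*(n+1)) + 4*k*(n+1) = 2*k*(Suc n*(Suc n+1))" by (simp add: algebra_simps)
  then show ?case using Suc by (simp add: power_add[symmetric])
qed simp


lemma f1_lem:
  assumes "i < n"
  shows "(fps_X::bit fps)^(k*(4*n+3)) + (fps_X^(4*k))^(i+1) = fps_X^(4*k*(i+1)) * (1 + fps_X^(k*(4*(n-1-i)+3)))"
proof -
  from less_imp_Suc_add[OF assms] obtain r where "n = Suc (i + r)" by blast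
  then have r: "n = i+1+r" by simp
  have e: "k*(4*n+3) = 4*k*(i+1) + k*(4*(n-1-i)+3)" unfolding r by (simp add: algebra_simps)
  have "(fps_X::bit fps)^(k*(4*n+3)) = fps_X^(4*k*(i+1)) * fps_X^(k*(4*(n-1-i)+3))"
    unfolding e by (rule power_add)
  moreover have "((fps_X::bit fps)^(4*k))^(i+1) = fps_X^(4*k*(i+1))" by (rule power_mult[symmetric])
  ultimately show ?thesis by (simp add: algebra_simps)
qed

lemma f2_lem:
  "(fps_X::bit fps)^(k*(4*n+3)) + (fps_X^(4*k))^(n+i+1) = fps_X^(k*(4*n+3)) * (1 + fps_X^(k*(4*i+1)))"
proof -
  have e: "4*k*(n+i+1) = k*(4*n+3) + k*(4*i+1)" by (simp add: algebra_simps)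
  have "((fps_X::bit fps)^(4*k))^(n+i+1) = fps_X^(k*(4*n+3)) * fps_X^(k*(4*i+1))"
    unfolding power_mult[symmetric] e by (rule power_add)
  then show ?thesis by (simp add: algebra_simps)
qed

lemma expo_lem:
  assumes "i \<le> 2*n"
  shows "4*k*tri i + k*(4*n+3)*(2*n-i) = k*(6*n^2+5*n) + k * G n i"
proof -
  have h: "2*int(tri i) = int i*(int i+1)" using arg_cong[OF two_tri[of i], of int] by (simp add: algebra_simps)
  have t: "4*int(tri i) = 2*(int i*(int i + 1))" using h by (simp add: algebra_simps)
  have g: "int (G n i) = 2*(int i - int n)^2 - (int i - int n)" unfolding G_def using quad_nonneg by simp
  have "int (4*tri i + (4*n+3)*(2*n-i)) = 4*int(tri i) + (4*int n + 3)*(2*int n - int i)"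
    using assms by (simp add: of_nat_diff)
  also have "\<dots> = 2*(int i*(int i+1)) + (4*int n+3)*(2*int n - int i)" using t by simp
  also have "\<dots> = 6*int n^2 + 5*int n + (2*(int i - int n)^2 - (int i - int n))"
    by (simp add: algebra_simps power2_eq_square)
  also have "\<dots> = int (6*n^2+5*n + G n i)" using g by simp
  finally have "4*tri i + (4*n+3)*(2*n-i) = 6*n^2+5*n + G n i" by (simp only: of_nat_eq_iff)
  then have "k*(4*tri i + (4*n+3)*(2*n-i)) = k*(6*n^2+5*n + G n i)" by simp
  then show ?thesis by (simp add: algebra_simps)
qed

lemma identity:
  "fps_X^(k*(6*n^2+5*n)) * L k n = fps_X^(k*(6*n^2+5*n)) *
      (\<Sum>i\<le>2*n. qb (fps_X^(4*k)) (2*n) i * fps_X^(k * G n i))"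
proof -
  let ?Q = "(fps_X::bit fps)^(4*k)" and ?y = "(fps_X::bit fps)^(k*(4*n+3))"
  let ?f = "\<lambda>i. ?y + ?Q^(i+1)"
  have C: "(\<Prod>i<2*n. ?f i) = (\<Sum>i\<le>2*n. qb ?Q (2*n) i * ?Q^(tri i) * ?y^(2*n-i))"
    by (rule cauchy)
  have split: "(\<Prod>i<2*n. ?f i) = (\<Prod>i<n. ?f i) * (\<Prod>i<n. ?f (n+i))"
    unfolding mult_2 by (rule prod_add_split)
  have P1: "(\<Prod>i<n. ?f i) = fps_X^(2*k*(n*(n+1))) * (\<Prod>i<n. 1 + fps_X^(k*(4*i+3)))"
  proof -
    have "(\<Prod>i<n. ?f i) = (\<Prod>i<n. fps_X^(4*k*(i+1)) * ((1::bit fps) + fps_X^(k*(4*(n-1-i)+3))))"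
      by (intro prod.cong refl f1_lem) simp
    also have "\<dots> = (\<Prod>i<n. fps_X^(4*k*(i+1))) * (\<Prod>i<n. (1::bit fps) + fps_X^(k*(4*(n-1-i)+3)))"
      by (rule prod.distrib)
    also have "(\<Prod>i<n. (1::bit fps) + fps_X^(k*(4*(n-1-i)+3))) = (\<Prod>i<n. 1 + fps_X^(k*(4*i+3)))"
      using prod.nat_diff_reindex[of "\<lambda>i. (1::bit fps) + fps_X^(k*(4*i+3))" n] by simp
    finally show ?thesis by (simp only: prod_Xpow)
  qed
  have P2: "(\<Prod>i<n. ?f (n+i)) = fps_X^(k*(4*n+3)*n) * (\<Prod>i<n. 1 + fps_X^(k*(4*i+1)))"
  proof -
    have "(\<Prod>i<n. ?f (n+i)) = (\<Prod>i<n. ?y * ((1::bit fps) + fps_X^(k*(4*i+1))))"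
      by (intro prod.cong refl) (simp only: add.assoc[symmetric] f2_lem)
    also have "\<dots> = ?y^n * (\<Prod>i<n. (1::bit fps) + fps_X^(k*(4*i+1)))"
      by (simp add: prod.distrib)
    finally show ?thesis by (simp only: power_mult)
  qed
  have LL: "L k n = (\<Prod>i<n. 1 + fps_X^(k*(4*i+1))) * (\<Prod>i<n. 1 + fps_X^(k*(4*i+3)))"
  proof -
    have L0: "L k n = (\<Prod>i<n. 1 + fps_X^(k*(2*(2*i)+1))) * (\<Prod>i<n. 1 + fps_X^(k*(2*(2*i+1)+1)))"
      unfolding L_def by (rule prod_split2)
    have e1: "\<And>i::nat. 2*(2*i)+1 = 4*i+1" and e2: "\<And>i::nat. 2*(2*i+1)+1 = 4*i+(3::nat)" by simp_all
    show ?thesis by (simp only: L0 e1 e2)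
  qed
  have ex: "k*(6*n^2+5*n) = 2*k*(n*(n+1)) + k*(4*n+3)*n" by (simp add: algebra_simps power2_eq_square)
  have LHS: "(\<Prod>i<2*n. ?f i) = fps_X^(k*(6*n^2+5*n)) * L k n"
  proof -
    have "(\<Prod>i<2*n. ?f i) = (fps_X^(2*k*(n*(n+1))) * fps_X^(k*(4*n+3)*n)) *
       ((\<Prod>i<n. 1 + fps_X^(k*(4*i+1))) * (\<Prod>i<n. 1 + fps_X^(k*(4*i+3))))"
      unfolding split P1 P2 by (simp only: ac_simps)
    also have "\<dots> = fps_X^(k*(6*n^2+5*n)) * L k n"
      unfolding LL ex power_add by (simp only: ac_simps)
    finally show ?thesis .
  qed
  have tm: "qb ?Q (2*n) i * ?Q^(tri i) * ?y^(2*n-i) = fps_X^(k*(6*n^2+5*n)) * (qb ?Q (2*n) i * fps_X^(k * G n i))"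
    if "i \<le> 2*n" for i
  proof -
    have "?Q^(tri i) * ?y^(2*n-i) = fps_X^(4*k*tri i + k*(4*n+3)*(2*n-i))"
      by (simp only: power_mult[symmetric] power_add)
    also have "\<dots> = fps_X^(k*(6*n^2+5*n)) * fps_X^(k * G n i)"
      by (simp only: expo_lem[OF that] power_add)
    finally have e: "?Q^(tri i) * ?y^(2*n-i) = fps_X^(k*(6*n^2+5*n)) * fps_X^(k * G n i)" .
    have "qb ?Q (2*n) i * ?Q^(tri i) * ?y^(2*n-i) = qb ?Q (2*n) i * (?Q^(tri i) * ?y^(2*n-i))"
      by (rule mult.assoc)
    also have "\<dots> = qb ?Q (2*n) i * (fps_X^(k*(6*n^2+5*n)) * fps_X^(k * G n i))" by (simp only: e)
    also have "\<dots> = fps_X^(k*(6*n^2+5*n)) * (qb ?Q (2*n) i * fps_X^(k * G n i))" by (rule mult.left_commute)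
    finally show ?thesis .
  qed
  have "(\<Sum>i\<le>2*n. qb ?Q (2*n) i * ?Q^(tri i) * ?y^(2*n-i))
      = fps_X^(k*(6*n^2+5*n)) * (\<Sum>i\<le>2*n. qb ?Q (2*n) i * fps_X^(k * G n i))"
    unfolding sum_distrib_left by (intro sum.cong refl tm) simp
  then show ?thesis using C LHS by simp
qed

lemma identity': "L k n = (\<Sum>i\<le>2*n. qb (fps_X^(4*k)) (2*n) i * fps_X^(k * G n i))"
proof -
  have "(fps_X::bit fps)^(k*(6*n^2+5*n)) \<noteq> 0" by simp
  then show ?thesis using identity[of k n] by (rule mult_left_cancel[THEN iffD1])
qed




lemma Ef0: "1 \<le> k \<Longrightarrow> Ef k $ 0 = 1"
  by (simp add: Ef_def T_def)

lemma Ef_4: assumes "1 \<le> k" shows "Ef (4*k) = Ef k ^ 4"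
proof -
  have "Ef (4*k) = Ef (2*(2*k))" by simp
  also have "\<dots> = Ef (2*k) ^ 2" using assms by (intro Ef_double) simp
  also have "\<dots> = (Ef k ^ 2)^2" using assms by (simp add: Ef_double)
  finally show ?thesis by (simp only: power4_eq_xxxx power2_eq_square mult.assoc)
qed

lemma PQ_T: "PQ (fps_X^(4*k)) m = T (4*k) m"
  unfolding PQ_def T_def by (intro prod.cong refl) (simp only: power_mult[symmetric])

lemma qb_approx:
  assumes "1 \<le> k" "d < i" "d < N - i" "i \<le> N"
  shows "eqto d (qb (fps_X^(4*k)) N i * Ef (4*k)) 1"
proof -
  let ?Q = "(fps_X::bit fps)^(4*k)" and ?E = "Ef (4*k)"
  have k4: "1 \<le> 4*k" using assms by simp
  have a1: "eqto d (T (4*k) i) ?E" using eqto_Ef[OF k4 assms(2)] by (rule eqto_sym)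
  have a2: "eqto d (T (4*k) (N-i)) ?E" using eqto_Ef[OF k4 assms(3)] by (rule eqto_sym)
  have "d < N" using assms by simp
  then have a3: "eqto d (T (4*k) N) ?E" using eqto_Ef[OF k4] by (blast intro: eqto_sym[of d ?E])
  have "eqto d (qb ?Q N i * ?E * ?E) (qb ?Q N i * T (4*k) i * T (4*k) (N-i))"
    by (rule eqto_mult[OF eqto_mult[OF eqto_refl eqto_sym[OF a1]] eqto_sym[OF a2]])
  also have "qb ?Q N i * T (4*k) i * T (4*k) (N-i) = T (4*k) N"
    using qb_prod[OF assms(4), of ?Q] by (simp add: PQ_T)
  finally have "eqto d (qb ?Q N i * ?E * ?E) (1 * ?E)" using a3 by (auto intro: eqto_trans)
  then show ?thesis by (rule eqto_cancel) (simp add: Ef0[OF k4])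
qed

lemma G_bound: "\<bar>int i - int n\<bar> \<le> int (G n i)"
  unfolding G_def using quad_pos[of "int i - int n"] quad_nonneg[of "int i - int n"]
  by (cases "int i - int n = 0") auto

lemma sum_approx:
  assumes "1 \<le> k" "2*d+2 \<le> n"
  shows "eqto d (\<Sum>i\<le>2*n. (qb (fps_X^(4*k)) (2*n) i * Ef (4*k)) * fps_X^(k * G n i))
                (\<Sum>i\<le>2*n. fps_X^(k * G n i))"
proof (rule eqto_sum)
  fix i assume i: "i \<in> {..2*n}"
  let ?a = "qb (fps_X^(4*k)) (2*n) i * Ef (4*k)"
  show "eqto d (?a * fps_X^(k * G n i)) (fps_X^(k * G n i))"
  proof (cases "d < k * G n i")
    case True
    have "eqto d (fps_X^(k * G n i) * ?a) 0" using True by (rule eqto_Xpow_mult0)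
    moreover have "eqto d (fps_X^(k * G n i) * 1) 0" using True by (rule eqto_Xpow_mult0)
    ultimately have "eqto d (fps_X^(k * G n i) * ?a) (fps_X^(k * G n i) * 1)" by (metis eqto_trans eqto_sym)
    then show ?thesis by (simp add: mult.commute)
  next
    case False
    have "1 * G n i \<le> k * G n i" using assms(1) by (rule mult_le_mono1)
    then have "G n i \<le> d" using False by linarith
    then have "\<bar>int i - int n\<bar> \<le> int d" using G_bound[of i n] by linarith
    then have "d < i" "d < 2*n - i" "i \<le> 2*n" using assms(2) i by auto
    then have "eqto d ?a 1" using assms(1) by (intro qb_approx) auto
    then have "eqto d (?a * fps_X^(k * G n i)) (1 * fps_X^(k * G n i))" by (rule eqto_mult[OF _ eqto_refl])
    then show ?thesis by simp
  qed
qed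

lemma sum_of_bool_card: "(\<Sum>i\<in>S. (of_bool (P i) :: 'a::comm_semiring_1)) = of_nat (card {i\<in>S. P i})" if "finite S"
  using sum.inter_filter[OF that, of "\<lambda>_. (1::'a)" P] by (simp add: of_bool_def)

lemma G_inj: "G n i = G n i' \<Longrightarrow> i = i'"
proof -
  assume "G n i = G n i'"
  then have "int (G n i) = int (G n i')" by simp
  then have "2*(int i - int n)^2 - (int i - int n) = 2*(int i' - int n)^2 - (int i' - int n)"
    unfolding G_def using quad_nonneg by simp
  then have "int i - int n = int i' - int n" by (rule quad_inj)
  then show "i = i'" by simp
qed

lemma G_exists:
  assumes "1 \<le> k" "m \<le> n"
  shows "(\<exists>i\<le>2*n. m = k * G n i) \<longleftrightarrow> (k dvd m \<and> tr (m div k))"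
proof
  assume "\<exists>i\<le>2*n. m = k * G n i"
  then obtain i where "m = k * G n i" by blast
  moreover have "tr (G n i)" unfolding tr_def G_def using quad_nonneg
    by (intro exI[of _ "int i - int n"]) simp
  ultimately show "k dvd m \<and> tr (m div k)" using assms(1) by simp
next
  assume h: "k dvd m \<and> tr (m div k)"
  then obtain j where j: "int (m div k) = 2*j^2 - j" unfolding tr_def by blast
  have "\<bar>j\<bar> \<le> int (m div k)" using j quad_pos[of j] by (cases "j = 0") auto
  also have "m div k \<le> m" by simp
  finally have jb: "\<bar>j\<bar> \<le> int n" using assms(2) by linarith
  define i where "i = nat (int n + j)"
  have ii: "int i - int n = j" unfolding i_def using jb by simp
  have "int (G n i) = int (m div k)" unfolding G_def ii using quad_nonneg j by simp
  then have "G n i = m div k" by simp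
  then have "m = k * G n i" using h by simp
  moreover have "i \<le> 2*n" unfolding i_def using jb by simp
  ultimately show "\<exists>i\<le>2*n. m = k * G n i" by blast
qed

lemma card_lem:
  assumes "1 \<le> k" "m \<le> n"
  shows "(\<Sum>i\<le>2*n. (fps_X::bit fps)^(k * G n i)) $ m = psi k $ m"
proof -
  have "(\<Sum>i\<le>2*n. (fps_X::bit fps)^(k * G n i)) $ m = (\<Sum>i\<le>2*n. if m = k * G n i then 1 else 0)"
    by (simp add: fps_sum_nth)
  also have "\<dots> = of_nat (card {i\<in>{..2*n}. m = k * G n i})"
    using sum.inter_filter[of "{..2*n}" "\<lambda>_. (1::bit)" "\<lambda>i. m = k * G n i"] by simp
  also have "card {i\<in>{..2*n}. m = k * G n i} = (if k dvd m \<and> tr (m div k) then 1 else 0)"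
  proof (cases "k dvd m \<and> tr (m div k)")
    case True
    then obtain i where i: "i \<le> 2*n" "m = k * G n i" using G_exists[OF assms] by blast
    have "{i\<in>{..2*n}. m = k * G n i} = {i}"
      using i assms(1) G_inj[of n i] by auto
    then show ?thesis using True by simp
  next
    case False
    then have "{i\<in>{..2*n}. m = k * G n i} = {}" using G_exists[OF assms] by auto
    then show ?thesis using False by auto
  qed
  finally show ?thesis by (simp add: psi_def)
qed

theorem jacobi2: assumes "1 \<le> k" shows "Ef k ^ 3 = psi k"
proof (rule eqto_all)
  fix d :: nat
  define n where "n = 2*d+2"
  let ?E = "Ef k" and ?E2 = "Ef (2*k)" and ?E4 = "Ef (4*k)"
  have k2: "1 \<le> 2*k" using assms by simp
  have a: "eqto d ?E (L k n * ?E2)"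
  proof -
    have "eqto d ?E (T k (4*n))" using assms n_def by (intro eqto_Ef) auto
    moreover have "eqto d (T (2*k) (2*n)) ?E2" using eqto_Ef[OF k2, of d "2*n"] n_def by (simp add: eqto_sym)
    then have "eqto d (L k n * T (2*k) (2*n)) (L k n * ?E2)" by (rule eqto_mult[OF eqto_refl])
    ultimately show ?thesis unfolding T_split by (rule eqto_trans)
  qed
  have b: "eqto d (?E^3) (L k n * ?E4)"
  proof -
    have "eqto d (?E * ?E^2) (L k n * ?E2 * ?E^2)" using a by (intro eqto_mult) auto
    moreover have "?E^3 = ?E * ?E^2" by (simp add: power_numeral_reduce)
    moreover have "L k n * ?E2 * ?E^2 = L k n * ?E4"
      using Ef_double[OF assms] Ef_4[OF assms] by (simp add: mult.assoc power_add[symmetric])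
    ultimately show ?thesis by simp
  qed
  have c: "L k n * ?E4 = (\<Sum>i\<le>2*n. (qb (fps_X^(4*k)) (2*n) i * ?E4) * fps_X^(k * G n i))"
    unfolding identity' sum_distrib_right by (intro sum.cong refl) (simp add: ac_simps)
  have e: "eqto d (\<Sum>i\<le>2*n. (fps_X::bit fps)^(k * G n i)) (psi k)"
    unfolding eqto_def
  proof (intro allI impI)
    fix m assume "m \<le> d"
    then have "m \<le> n" using n_def by simp
    then show "(\<Sum>i\<le>2*n. (fps_X::bit fps)^(k * G n i)) $ m = psi k $ m" by (rule card_lem[OF assms])
  qed
  have s: "eqto d (\<Sum>i\<le>2*n. (qb (fps_X^(4*k)) (2*n) i * ?E4) * fps_X^(k * G n i)) (\<Sum>i\<le>2*n. fps_X^(k * G n i))"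
    using sum_approx[OF assms, of d n] n_def by simp
  show "eqto d (?E^3) (psi k)"
    using eqto_trans[OF eqto_trans[OF b[unfolded c] s] e] .
qed




lemma bit_sq[simp]: "(x::bit) * x = x" by (cases x) auto
lemma bit_add_self[simp]: "(x::bit) + x = 0" by (cases x) auto

lemma inv_sum:
  assumes "finite S" "\<And>s. s \<in> S \<Longrightarrow> \<sigma> s \<in> S" "\<And>s. s \<in> S \<Longrightarrow> \<sigma> (\<sigma> s) = s"
    "\<And>s. s \<in> S \<Longrightarrow> f (\<sigma> s) = f s"
  shows "(\<Sum>s\<in>S. (f s::bit)) = (\<Sum>s\<in>{s\<in>S. \<sigma> s = s}. f s)"
  using assms
proof (induct "card S" arbitrary: S rule: less_induct)
  case less
  show ?case
  proof (cases "\<forall>s\<in>S. \<sigma> s = s")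
    case True
    then have "{s\<in>S. \<sigma> s = s} = S" by auto
    then show ?thesis by simp
  next
    case False
    then obtain s where s: "s \<in> S" "\<sigma> s \<noteq> s" by blast
    let ?S' = "S - {s, \<sigma> s}"
    have ss: "\<sigma> s \<in> S" using less s by auto
    have "card S > 0" using less(2) s card_gt_0_iff by blast
    then have card: "card ?S' < card S" using less(2) s ss by (simp add: card_Diff_subset)
    have pres: "\<sigma> t \<in> ?S'" if "t \<in> ?S'" for t
    proof -
      have t: "t \<in> S" "t \<noteq> s" "t \<noteq> \<sigma> s" using that by auto
      have "\<sigma> t \<noteq> s" using t less(4)[of t] less(4)[of s] s by metis
      moreover have "\<sigma> t \<noteq> \<sigma> s" using t less(4)[of t] less(4)[of s] s by metis
      ultimately show ?thesis using less(3) t by auto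
    qed
    have IH: "(\<Sum>s\<in>?S'. f s) = (\<Sum>s\<in>{t\<in>?S'. \<sigma> t = t}. f s)"
      by (rule less(1)[of ?S', OF card]) (use less pres in auto)
    have "(\<Sum>t\<in>S. f t) = f s + (\<Sum>t\<in>S - {s}. f t)" using less(2) s by (simp add: sum.remove)
    also have "(\<Sum>t\<in>S - {s}. f t) = f (\<sigma> s) + (\<Sum>t\<in>S - {s} - {\<sigma> s}. f t)"
      using less(2) s ss by (intro sum.remove) auto
    also have "S - {s} - {\<sigma> s} = ?S'" by auto
    also have "f (\<sigma> s) = f s" using less(5) s by simp
    finally have "(\<Sum>t\<in>S. f t) = (\<Sum>t\<in>?S'. f t)" by (simp add: add.assoc[symmetric])
    moreover have "{t\<in>?S'. \<sigma> t = t} = {t\<in>S. \<sigma> t = t}" using s less(4)[of s] by auto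
    ultimately show ?thesis using IH by simp
  qed
qed

lemma frob: "((h::bit fps)^2) $ n = (if even n then h $ (n div 2) else 0)"
proof -
  have "(h^2) $ n = (\<Sum>i\<in>{0..n}. h$i * h$(n-i))" by (simp add: power2_eq_square fps_mult_nth)
  also have "\<dots> = (\<Sum>i\<in>{i\<in>{0..n}. n - i = i}. h$i * h$(n-i))"
    by (rule inv_sum[where \<sigma> = "\<lambda>i. n - i"]) (auto simp: mult.commute)
  also have "{i\<in>{0..n}. n - i = i} = (if even n then {n div 2} else {})"
  proof (cases "even n")
    case True
    then obtain b where "n = 2*b" by blast
    then show ?thesis by auto
  next
    case False
    then have "n - i \<noteq> i" for i by presburger
    then show ?thesis using False by auto
  qed
  finally show ?thesis by (auto elim!: evenE)
qed

lemma frob4: "((h::bit fps)^4) $ n = (if 4 dvd n then h $ (n div 4) else 0)"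
proof -
  have "h^4 = (h^2)^2" by (simp only: power4_eq_xxxx power2_eq_square mult.assoc)
  have c: "(even n \<and> even (n div 2)) = (4 dvd n)" by presburger
  have d: "n div 2 div 2 = n div 4" by (simp add: div_mult2_eq)
  show ?thesis unfolding \<open>h^4 = (h^2)^2\<close> frob using c d by auto
qed




lemma odd_sq8: "odd (x::int) \<Longrightarrow> \<exists>t. x^2 = 8*t + 1"
proof -
  assume "odd x"
  then obtain a where a: "x = 2*a+1" by (blast elim: oddE)
  have "even (a*(a+1))" by simp
  then obtain b where b: "a*(a+1) = 2*b" by blast
  have "x^2 = 4*(a*(a+1)) + 1" unfolding a by (simp add: algebra_simps power2_eq_square)
  then show ?thesis unfolding b by (intro exI[of _ b]) simp
qed

lemma sq_odd: "(x::int)^2 = 2*t + 1 \<Longrightarrow> odd x"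
proof -
  assume h: "x^2 = 2*t + 1"
  have "odd (x^2)" unfolding h by simp
  then show ?thesis by simp
qed

lemma tr_iff: "tr t \<longleftrightarrow> (\<exists>x::int. x^2 = 8*int t + 1)"
proof
  assume "tr t"
  then obtain j where j: "int t = 2*j^2 - j" unfolding tr_def by blast
  show "\<exists>x::int. x^2 = 8*int t + 1"
    by (rule exI[of _ "4*j - 1"]) (simp add: j algebra_simps power2_eq_square)
next
  assume "\<exists>x::int. x^2 = 8*int t + 1"
  then obtain x where x: "x^2 = 8*int t + 1" by blast
  then have "odd x" using sq_odd[of x "4*int t"] by simp
  then have m: "x mod 4 = 1 \<or> x mod 4 = 3" by presburger
  define a where "a = x div 4"
  have xa: "x = 4*a + x mod 4" unfolding a_def by simp
  show "tr t" unfolding tr_def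
  proof (cases "x mod 4 = 1")
    case True
    then have "x = 4*a+1" using xa by simp
    then have "8*int t = 8*(2*a^2 + a)" using x by (simp add: algebra_simps power2_eq_square)
    then show "\<exists>j. int t = 2*j^2 - j" by (intro exI[of _ "-a"]) simp
  next
    case False
    then have "x = 4*(a+1) - 1" using xa m by simp
    then have "8*int t = 8*(2*(a+1)^2 - (a+1))" using x by (simp add: algebra_simps power2_eq_square)
    then show "\<exists>j. int t = 2*j^2 - j" by (intro exI[of _ "a+1"]) simp
  qed
qed

definition W :: "nat \<Rightarrow> (int \<times> int) set" where
  "W n = {(x,y). 0 < x \<and> 0 < y \<and> odd x \<and> odd y \<and> x^2 + 3*y^2 = 8*int n + 4}"

definition sig :: "int \<times> int \<Rightarrow> int \<times> int" where
  "sig p = (let u = (fst p + snd p) div 2 in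
     if odd u then (\<bar>u - 2*snd p\<bar>, u) else (u + snd p, \<bar>u - snd p\<bar>))"

lemma sig_eq: "x + y = 2*u \<Longrightarrow> sig (x,y) = (if odd u then (\<bar>u - 2*y\<bar>, u) else (u + y, \<bar>u - y\<bar>))"
  by (simp add: sig_def Let_def)

lemma le_sq: "0 < (x::int) \<Longrightarrow> x \<le> x^2"
  by (simp add: power2_eq_square)

lemma W_finite: "finite (W n)"
proof -
  have "W n \<subseteq> {1..8*int n+4} \<times> {1..8*int n+4}"
  proof
    fix p assume "p \<in> W n"
    then obtain x y where p: "p = (x,y)" "0 < x" "0 < y" "x^2 + 3*y^2 = 8*int n + 4"
      unfolding W_def by auto
    have "x \<le> x^2" "y \<le> y^2" using p le_sq by auto
    moreover have "0 \<le> x^2" "0 \<le> y^2" by auto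
    ultimately show "p \<in> {1..8*int n+4} \<times> {1..8*int n+4}" using p by auto
  qed
  then show ?thesis by (rule finite_subset) auto
qed

lemma sig_W:
  assumes "p \<in> W n"
  shows "sig p \<in> W n \<and> sig (sig p) = p \<and> (sig p = p \<longleftrightarrow> fst p = snd p \<or> fst p = 3 * snd p)"
proof -
  obtain x y where p: "p = (x,y)" "0 < x" "0 < y" "odd x" "odd y" "x^2 + 3*y^2 = 8*int n + 4"
    using assms unfolding W_def by auto
  have "even (x+y)" using p by simp
  then obtain u where u: "x + y = 2*u" by blast
  have x: "x = 2*u - y" using u by simp
  show ?thesis
  proof (cases "odd u")
    case True
    have s: "sig (x,y) = (\<bar>u - 2*y\<bar>, u)" using sig_eq[OF u] True by simp
    have o1: "odd (u - 2*y)" using True by simp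
    then have nz: "u - 2*y \<noteq> 0" by (metis even_zero)
    have n1: "\<bar>u - 2*y\<bar>^2 + 3*u^2 = x^2 + 3*y^2" unfolding x by (simp add: algebra_simps power2_eq_square)
    have inW: "sig p \<in> W n" unfolding p s W_def using p o1 nz n1 True u by auto
    have ss: "sig (sig p) = p"
    proof (cases "2*y \<le> u")
      case True2: True
      have h: "\<bar>u - 2*y\<bar> + u = 2*(u - y)" using True2 by simp
      have "even (u - y)" using True p by simp
      then have "sig (\<bar>u - 2*y\<bar>, u) = (u - y + u, \<bar>u - y - u\<bar>)" using sig_eq[OF h] by simp
      then show ?thesis unfolding p s using x p by simp
    next
      case False2: False
      have h: "\<bar>u - 2*y\<bar> + u = 2*y" using False2 by simp
      then have "sig (\<bar>u - 2*y\<bar>, u) = (\<bar>y - 2*u\<bar>, y)" using sig_eq[OF h] p by simp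
      then show ?thesis unfolding p s using x p by simp
    qed
    have fx: "sig p = p \<longleftrightarrow> x = y \<or> x = 3*y"
    proof
      assume "sig p = p"
      then have "u = y" using p s by simp
      then show "x = y \<or> x = 3*y" using x by simp
    next
      assume "x = y \<or> x = 3*y"
      then show "sig p = p"
      proof
        assume "x = y" then have "u = y" using u by simp
        then show ?thesis using p s x by simp
      next
        assume "x = 3*y" then have "u = 2*y" using u by simp
        then show ?thesis using True by simp
      qed
    qed
    show ?thesis using inW ss fx p by simp
  next
    case False
    have s: "sig (x,y) = (u + y, \<bar>u - y\<bar>)" using sig_eq[OF u] False by simp
    have o1: "odd (u - y)" "odd (u + y)" using False p by simp_all
    then have nz: "u - y \<noteq> 0" by (metis even_zero)
    have upos: "0 < u" using u p by simp
    have n1: "(u + y)^2 + 3*\<bar>u - y\<bar>^2 = x^2 + 3*y^2" unfolding x by (simp add: algebra_simps power2_eq_square)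
    have inW: "sig p \<in> W n" unfolding p s W_def using p o1 nz n1 upos by auto
    have ss: "sig (sig p) = p"
    proof (cases "y \<le> u")
      case True2: True
      have h: "u + y + \<bar>u - y\<bar> = 2*u" using True2 by simp
      then have "sig (u + y, \<bar>u - y\<bar>) = (u + \<bar>u - y\<bar>, \<bar>u - \<bar>u - y\<bar>\<bar>)" using sig_eq[OF h] False by simp
      then show ?thesis unfolding p s using x p True2 by simp
    next
      case False2: False
      have h: "u + y + \<bar>u - y\<bar> = 2*y" using False2 by simp
      then have "sig (u + y, \<bar>u - y\<bar>) = (\<bar>y - 2*\<bar>u - y\<bar>\<bar>, y)" using sig_eq[OF h] p by simp
      then show ?thesis unfolding p s using x p False2 by simp
    qed
    have fx: "sig p = p \<longleftrightarrow> x = y \<or> x = 3*y"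
    proof
      assume "sig p = p"
      then have "u + y = x" using p s by simp
      then show "x = y \<or> x = 3*y" using x by simp
    next
      assume "x = y \<or> x = 3*y"
      then show "sig p = p"
      proof
        assume "x = y" then have "u = y" using u by simp
        then show ?thesis using False p by simp
      next
        assume "x = 3*y" then have "u = 2*y" using u by simp
        then show ?thesis using p s x by simp
      qed
    qed
    show ?thesis using inW ss fx p by simp
  qed
qed




lemma psi_nth: "psi k $ m = of_bool (k dvd m \<and> tr (m div k))" by (simp add: psi_def)

definition Ii :: "nat \<Rightarrow> nat set" where
  "Ii n = {i\<in>{0..n}. tr i \<and> 3 dvd (n-i) \<and> tr ((n-i) div 3)}"

lemma step1: "(psi 1 * psi 3) $ n = of_nat (card (Ii n))"
proof -
  have "(psi 1 * psi 3) $ n = (\<Sum>i\<in>{0..n}. if tr i \<and> 3 dvd (n-i) \<and> tr ((n-i) div 3) then 1 else 0)"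
    unfolding fps_mult_nth psi_nth by (intro sum.cong refl) simp
  also have "\<dots> = of_nat (card (Ii n))"
    unfolding Ii_def using sum.inter_filter[of "{0..n}" "\<lambda>_. (1::bit)" "\<lambda>i. tr i \<and> 3 dvd (n-i) \<and> tr ((n-i) div 3)"]
    by simp
  finally show ?thesis .
qed

definition gW :: "int \<times> int \<Rightarrow> nat" where "gW p = nat ((fst p ^ 2 - 1) div 8)"

lemma W_decomp:
  assumes "(x,y) \<in> W n"
  obtains t s where "x^2 = 8*t+1" "y^2 = 8*s+1" "0 \<le> t" "0 \<le> s" "t + 3*s = int n"
proof -
  have p: "0 < x" "0 < y" "odd x" "odd y" "x^2 + 3*y^2 = 8*int n + 4" using assms unfolding W_def by auto
  obtain t where t: "x^2 = 8*t+1" using odd_sq8[OF p(3)] by blast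
  obtain s where s: "y^2 = 8*s+1" using odd_sq8[OF p(4)] by blast
  have "0 < x^2" "0 < y^2" using p by auto
  then have "0 \<le> t" "0 \<le> s" using t s by auto
  moreover have "t + 3*s = int n" using p(5) t s by simp
  ultimately show ?thesis using that t s by blast
qed

lemma gW_val: assumes "x^2 = 8*t+1" "0 \<le> t" shows "gW (x,y) = nat t"
  unfolding gW_def using assms by simp

lemma gW_inj: "inj_on gW (W n)"
proof (rule inj_onI)
  fix p q assume pq: "p \<in> W n" "q \<in> W n" "gW p = gW q"
  obtain x y where p: "p = (x,y)" by force
  obtain x' y' where q: "q = (x',y')" by force
  obtain t s where ts: "x^2 = 8*t+1" "y^2 = 8*s+1" "0 \<le> t" "0 \<le> s" "t + 3*s = int n"
    using W_decomp pq(1) p by blast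
  obtain t' s' where ts': "x'^2 = 8*t'+1" "y'^2 = 8*s'+1" "0 \<le> t'" "0 \<le> s'" "t' + 3*s' = int n"
    using W_decomp pq(2) q by blast
  have "gW p = nat t" unfolding p by (rule gW_val[OF ts(1) ts(3)])
  moreover have "gW q = nat t'" unfolding q by (rule gW_val[OF ts'(1) ts'(3)])
  ultimately have "nat t = nat t'" using pq(3) by simp
  then have tt: "t = t'" using ts ts' by simp
  then have "s = s'" using ts ts' by simp
  have pos: "0 < x" "0 < y" "0 < x'" "0 < y'" using pq p q unfolding W_def by auto
  have "x^2 = x'^2" "y^2 = y'^2" using ts ts' tt \<open>s = s'\<close> by auto
  then have "x = x'" "y = y'" using pos by (simp_all add: power2_eq_iff_nonneg)
  then show "p = q" using p q by simp
qed

lemma gW_img: "gW ` W n = Ii n"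
proof
  show "gW ` W n \<subseteq> Ii n"
  proof
    fix i assume "i \<in> gW ` W n"
    then obtain x y where xy: "(x,y) \<in> W n" "i = gW (x,y)" by force
    obtain t s where ts: "x^2 = 8*t+1" "y^2 = 8*s+1" "0 \<le> t" "0 \<le> s" "t + 3*s = int n"
      using W_decomp xy(1) by blast
    have i: "int i = t" using xy(2) gW_val[OF ts(1,3)] ts(3) by simp
    have ni: "int (n - i) = 3*s" using i ts by simp
    then have d3: "3 dvd (n-i)" by presburger
    have "int ((n-i) div 3) = s" using ni by simp
    then have "tr ((n-i) div 3)" unfolding tr_iff using ts(2) by (intro exI[of _ y]) simp
    moreover have "tr i" unfolding tr_iff using ts(1) i by (intro exI[of _ x]) simp
    moreover have "i \<le> n" using i ts by simp
    ultimately show "i \<in> Ii n" unfolding Ii_def using d3 by simp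
  qed
next
  show "Ii n \<subseteq> gW ` W n"
  proof
    fix i assume i: "i \<in> Ii n"
    then have h: "i \<le> n" "tr i" "3 dvd (n-i)" "tr ((n-i) div 3)" unfolding Ii_def by auto
    obtain x where x: "x^2 = 8*int i + 1" using h(2) tr_iff by blast
    obtain y where y: "y^2 = 8*int ((n-i) div 3) + 1" using h(4) tr_iff by blast
    have ni: "int (n - i) = 3 * int ((n-i) div 3)" using h(3) by auto
    have ox: "odd x" using sq_odd[of x "4*int i"] x by simp
    have oy: "odd y" using sq_odd[of y "4*int ((n-i) div 3)"] y by simp
    have ax: "\<bar>x\<bar>^2 = 8*int i + 1" "\<bar>y\<bar>^2 = 8*int ((n-i) div 3) + 1" using x y by simp_all
    have "x \<noteq> 0" "y \<noteq> 0" using ox oy by auto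
    then have pos: "0 < \<bar>x\<bar>" "0 < \<bar>y\<bar>" by auto
    have "\<bar>x\<bar>^2 + 3*\<bar>y\<bar>^2 = 8*int n + 4" using ax ni h(1) by (simp add: algebra_simps of_nat_diff)
    then have "(\<bar>x\<bar>, \<bar>y\<bar>) \<in> W n" unfolding W_def using pos ox oy by simp
    moreover have "gW (\<bar>x\<bar>, \<bar>y\<bar>) = i" using gW_val[OF ax(1)] by simp
    ultimately show "i \<in> gW ` W n" by force
  qed
qed

lemma card_I_W: "card (Ii n) = card (W n)"
  using card_image[OF gW_inj[of n]] gW_img[of n] by simp

lemma step3: "(of_nat (card (W n)) :: bit) = of_nat (card {p\<in>W n. sig p = p})"
proof -
  have "(of_nat (card (W n)) :: bit) = (\<Sum>p\<in>W n. 1)" by simp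
  also have "\<dots> = (\<Sum>p\<in>{p\<in>W n. sig p = p}. 1)"
    by (rule inv_sum) (use W_finite sig_W in auto)
  also have "\<dots> = of_nat (card {p\<in>W n. sig p = p})" by simp
  finally show ?thesis .
qed

definition Pa :: "nat \<Rightarrow> bool" where "Pa n \<longleftrightarrow> 4 dvd n \<and> tr (n div 4)"
definition Pb :: "nat \<Rightarrow> bool" where
  "Pb n \<longleftrightarrow> n \<noteq> 0 \<and> 4 dvd (n-1) \<and> 3 dvd ((n-1) div 4) \<and> tr ((n-1) div 4 div 3)"

lemma Pa_iff: "Pa n \<longleftrightarrow> (\<exists>x::int. x^2 = 2*int n + 1)"
proof
  assume "Pa n"
  then obtain t where t: "n = 4*t" "tr t" unfolding Pa_def by auto
  then obtain x where "x^2 = 8*int t + 1" using tr_iff by blast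
  then show "\<exists>x::int. x^2 = 2*int n + 1" using t by auto
next
  assume "\<exists>x::int. x^2 = 2*int n + 1"
  then obtain x where x: "x^2 = 2*int n + 1" by blast
  then obtain t where t: "x^2 = 8*t+1" using odd_sq8 sq_odd by blast
  then have nt: "int n = 4*t" using x by simp
  then have "t \<ge> 0" by simp
  then have "n = 4 * nat t" using nt by simp
  moreover have "tr (nat t)" unfolding tr_iff using t \<open>t \<ge> 0\<close> by (intro exI[of _ x]) simp
  ultimately show "Pa n" unfolding Pa_def by simp
qed

lemma Pb_iff: "Pb n \<longleftrightarrow> (\<exists>y::int. 3*y^2 = 2*int n + 1)"
proof
  assume "Pb n"
  then have h: "n \<noteq> 0" "4 dvd (n-1)" "3 dvd ((n-1) div 4)" "tr ((n-1) div 4 div 3)" unfolding Pb_def by auto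
  from h(2) obtain a where a: "n - 1 = 4*a" by blast
  then have a': "(n-1) div 4 = a" by simp
  from h(3) a' obtain b where b: "a = 3*b" by blast
  then have b': "a div 3 = b" by simp
  have "n = 12*b + 1" using h(1) a b by simp
  moreover have "tr b" using h(4) a' b' by simp
  ultimately obtain s where s: "n = 12*s + 1" "tr s" by blast
  then obtain y where y: "y^2 = 8*int s + 1" using tr_iff by blast
  show "\<exists>y::int. 3*y^2 = 2*int n + 1" using s y by (intro exI[of _ y]) simp
next
  assume "\<exists>y::int. 3*y^2 = 2*int n + 1"
  then obtain y where y: "3*y^2 = 2*int n + 1" by blast
  have "odd (3*y^2)" unfolding y by simp
  then have "odd y" by simp
  then obtain s where s: "y^2 = 8*s+1" using odd_sq8 by blast
  then have nt: "int n = 12*s + 1" using y by simp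
  have "0 \<le> y^2" by simp
  then have "s \<ge> 0" using s by simp
  then have n: "n = 12 * nat s + 1" using nt by simp
  have "tr (nat s)" unfolding tr_iff using s \<open>s \<ge> 0\<close> by (intro exI[of _ y]) simp
  then show "Pb n" unfolding Pb_def n by simp
qed

lemma card_Fa: "card {p\<in>W n. fst p = snd p} = (if Pa n then 1 else 0)"
proof (cases "Pa n")
  case True
  then obtain x where x: "x^2 = 2*int n + 1" using Pa_iff by blast
  have ox: "odd \<bar>x\<bar>" using sq_odd[of x "int n"] x by simp
  then have "x \<noteq> 0" by auto
  then have px: "0 < \<bar>x\<bar>" by simp
  have ax: "\<bar>x\<bar>^2 = 2*int n + 1" using x by simp
  have "{p\<in>W n. fst p = snd p} = {(\<bar>x\<bar>, \<bar>x\<bar>)}"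
  proof (intro equalityI subsetI)
    fix p assume "p \<in> {p\<in>W n. fst p = snd p}"
    then obtain z where p: "p = (z,z)" "0 < z" "z^2 + 3*z^2 = 8*int n + 4" unfolding W_def by auto
    then have "z^2 = \<bar>x\<bar>^2" using ax by simp
    then have "z = \<bar>x\<bar>" using p(2) by (auto simp: power2_eq_iff)
    then show "p \<in> {(\<bar>x\<bar>, \<bar>x\<bar>)}" using p by simp
  next
    fix p assume "p \<in> {(\<bar>x\<bar>, \<bar>x\<bar>)}"
    then show "p \<in> {p\<in>W n. fst p = snd p}" unfolding W_def using ax ox px by auto
  qed
  then show ?thesis using True by simp
next
  case False
  have e: "{p\<in>W n. fst p = snd p} = {}"
  proof (rule ccontr)
    assume "{p\<in>W n. fst p = snd p} \<noteq> {}"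
    then obtain z where "(z,z) \<in> W n" by auto
    then have "z^2 + 3*z^2 = 8*int n + 4" unfolding W_def by auto
    then have "z^2 = 2*int n + 1" by simp
    then show False using False Pa_iff by blast
  qed
  show ?thesis unfolding e using False by simp
qed

lemma card_Fb: "card {p\<in>W n. fst p = 3 * snd p} = (if Pb n then 1 else 0)"
proof (cases "Pb n")
  case True
  then obtain y where y: "3*y^2 = 2*int n + 1" using Pb_iff by blast
  have "odd (3*y^2)" unfolding y by simp
  then have oy: "odd \<bar>y\<bar>" by simp
  then have "y \<noteq> 0" by auto
  then have py: "0 < \<bar>y\<bar>" by simp
  have ay: "3*\<bar>y\<bar>^2 = 2*int n + 1" using y by simp
  have "{p\<in>W n. fst p = 3 * snd p} = {(3*\<bar>y\<bar>, \<bar>y\<bar>)}"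
  proof (intro equalityI subsetI)
    fix p assume "p \<in> {p\<in>W n. fst p = 3 * snd p}"
    then obtain z where p: "p = (3*z,z)" "0 < z" "(3*z)^2 + 3*z^2 = 8*int n + 4" unfolding W_def by auto
    then have "z^2 = \<bar>y\<bar>^2" using ay by (simp add: power_mult_distrib)
    then have "z = \<bar>y\<bar>" using p(2) by (auto simp: power2_eq_iff)
    then show "p \<in> {(3*\<bar>y\<bar>, \<bar>y\<bar>)}" using p by simp
  next
    fix p assume "p \<in> {(3*\<bar>y\<bar>, \<bar>y\<bar>)}"
    then show "p \<in> {p\<in>W n. fst p = 3 * snd p}" unfolding W_def using ay oy py
      by (auto simp: power_mult_distrib)
  qed
  then show ?thesis using True by simp
next
  case False
  have e: "{p\<in>W n. fst p = 3 * snd p} = {}"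
  proof (rule ccontr)
    assume "{p\<in>W n. fst p = 3 * snd p} \<noteq> {}"
    then obtain z where "(3*z,z) \<in> W n" by auto
    then have "(3*z)^2 + 3*z^2 = 8*int n + 4" unfolding W_def by auto
    then have "3*z^2 = 2*int n + 1" by (simp add: power_mult_distrib)
    then show False using False Pb_iff by blast
  qed
  show ?thesis unfolding e using False by simp
qed

lemma G_coeff: "(psi 1 * psi 3) $ n = of_bool (Pa n) + of_bool (Pb n)"
proof -
  have fix_eq: "{p\<in>W n. sig p = p} = {p\<in>W n. fst p = snd p} \<union> {p\<in>W n. fst p = 3 * snd p}"
    using sig_W by auto
  have disj: "{p\<in>W n. fst p = snd p} \<inter> {p\<in>W n. fst p = 3 * snd p} = {}"
    unfolding W_def by auto
  have fin: "finite {p\<in>W n. fst p = snd p}" "finite {p\<in>W n. fst p = 3 * snd p}"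
    using W_finite by auto
  have "card {p\<in>W n. sig p = p} = (if Pa n then 1 else 0) + (if Pb n then 1 else 0)"
    unfolding fix_eq card_Un_disjoint[OF fin disj] card_Fa card_Fb ..
  then show ?thesis unfolding step1 card_I_W step3 by simp
qed

lemma G_eq: "psi 1 * psi 3 = psi 1 ^ 4 + fps_X * psi 3 ^ 4"
proof (rule fps_ext)
  fix n
  have a: "(psi 1 ^ 4) $ n = of_bool (Pa n)" unfolding frob4 psi_nth Pa_def by simp
  have b: "(fps_X * psi 3 ^ 4) $ n = of_bool (Pb n)" unfolding Pb_def
    by (cases n) (simp_all add: frob4 psi_nth)
  show "(psi 1 * psi 3) $ n = (psi 1 ^ 4 + fps_X * psi 3 ^ 4) $ n"
    unfolding G_coeff fps_add_nth a b ..
qed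




lemma psi0: "psi k $ 0 = 1"
  by (simp add: psi_nth tr_def exI[of _ 0])

lemma tr0: "tr 0" unfolding tr_def by (intro exI[of _ 0]) simp

lemma psi0': "psi k $ 0 = 1" using tr0 by (simp add: psi_nth)

definition FF :: "bit fps" where "FF = inverse (psi 1 * psi 3)"

lemma bit_cube: "((a::bit fps) + b)^3 = a^3 + a^2*b + a*b^2 + b^3"
proof -
  have "(a+b)^3 = a^3 + 3*a^2*b + 3*a*b^2 + b^3" by (simp add: power3_eq_cube algebra_simps power2_eq_square)
  moreover have "(3::bit fps) = 1" by (rule fps_ext) (simp add: fps_numeral_nth)
  ultimately show ?thesis by simp
qed

lemma FF_eq:
  "FF = (psi 1 ^ 2 * inverse (psi 3))^4 + fps_X * psi 1 ^ 4 + fps_X^2 * psi 3 ^ 4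
        + fps_X^3 * (psi 3 ^ 2 * inverse (psi 1))^4"
proof -
  let ?a = "psi 1" and ?b = "psi 3"
  let ?A = "?a^4" and ?B = "?b^4" and ?G = "?a * ?b"
  have a0: "?a $ 0 \<noteq> 0" "?b $ 0 \<noteq> 0" using psi0' by auto
  have ia: "?a * inverse ?a = 1" "?b * inverse ?b = 1" using a0 by (simp_all add: inverse_mult_eq_1')
  have g0: "?G $ 0 \<noteq> 0" using a0 by simp
  have iG: "?G * inverse ?G = 1" using g0 by (simp add: inverse_mult_eq_1')
  have "inverse ?G = ?G^3 * inverse ?G ^ 4"
  proof -
    have "?G^3 * inverse ?G ^ 4 = (?G * inverse ?G)^3 * inverse ?G"
      by (simp add: power_mult_distrib power_add[symmetric] ac_simps numeral_eq_Suc)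
    then show ?thesis using iG by simp
  qed
  also have "inverse ?G ^ 4 = inverse ?a ^ 4 * inverse ?b ^ 4"
    by (simp add: fps_inverse_mult power_mult_distrib)
  also have "?G^3 = (?A + fps_X * ?B)^3" using G_eq by simp
  also have "(?A + fps_X * ?B)^3 = ?A^3 + ?A^2*(fps_X*?B) + ?A*(fps_X*?B)^2 + (fps_X*?B)^3"
    by (rule bit_cube)
  finally have F1: "inverse ?G = (?A^3 + ?A^2*(fps_X*?B) + ?A*(fps_X*?B)^2 + (fps_X*?B)^3) * (inverse ?a ^ 4 * inverse ?b ^ 4)" .
  have u1: "?A * inverse ?a ^ 4 = 1" using ia by (simp add: power_mult_distrib[symmetric])
  have u2: "?B * inverse ?b ^ 4 = 1" using ia by (simp add: power_mult_distrib[symmetric])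
  have t1: "?A^3 * (inverse ?a ^ 4 * inverse ?b ^ 4) = (?a^2 * inverse ?b)^4"
  proof -
    have "?A^3 * (inverse ?a ^ 4 * inverse ?b ^ 4) = ?A^2 * (?A * inverse ?a ^ 4) * inverse ?b ^ 4"
      by (simp add: power_numeral_reduce ac_simps)
    also have "\<dots> = ?A^2 * inverse ?b ^ 4" using u1 by simp
    also have "\<dots> = (?a^2 * inverse ?b)^4" by (simp add: power_mult_distrib power_mult[symmetric] mult.commute)
    finally show ?thesis .
  qed
  have t2: "?A^2*(fps_X*?B) * (inverse ?a ^ 4 * inverse ?b ^ 4) = fps_X * ?A"
  proof -
    have "?A^2*(fps_X*?B) * (inverse ?a ^ 4 * inverse ?b ^ 4) = fps_X * ?A * (?A * inverse ?a ^ 4) * (?B * inverse ?b ^ 4)"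
      by (simp only: power2_eq_square ac_simps)
    also have "\<dots> = fps_X * ?A" by (simp only: u1 u2 mult_1_right)
    finally show ?thesis .
  qed
  have t3: "?A*(fps_X*?B)^2 * (inverse ?a ^ 4 * inverse ?b ^ 4) = fps_X^2 * ?B"
  proof -
    have "?A*(fps_X*?B)^2 * (inverse ?a ^ 4 * inverse ?b ^ 4) = fps_X^2 * ?B * (?A * inverse ?a ^ 4) * (?B * inverse ?b ^ 4)"
      by (simp only: power2_eq_square power_mult_distrib ac_simps)
    also have "\<dots> = fps_X^2 * ?B" by (simp only: u1 u2 mult_1_right)
    finally show ?thesis .
  qed
  have t4: "(fps_X*?B)^3 * (inverse ?a ^ 4 * inverse ?b ^ 4) = fps_X^3 * (?b^2 * inverse ?a)^4"
  proof -
    have "(fps_X*?B)^3 * (inverse ?a ^ 4 * inverse ?b ^ 4) = fps_X^3 * ?B^2 * inverse ?a ^ 4 * (?B * inverse ?b ^ 4)"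
      by (simp add: power_mult_distrib power_numeral_reduce ac_simps)
    also have "\<dots> = fps_X^3 * (?B^2 * inverse ?a ^ 4)" using u2 by (simp add: ac_simps)
    also have "?B^2 * inverse ?a ^ 4 = (?b^2 * inverse ?a)^4" by (simp add: power_mult_distrib power_mult[symmetric] mult.commute)
    finally show ?thesis .
  qed
  show ?thesis unfolding FF_def F1 distrib_right t1 t2 t3 t4 ..
qed

lemma FF_1: "FF $ (4*t+1) = psi 1 $ t"
  unfolding FF_eq fps_add_nth by (simp add: frob4 fps_X_power_mult_nth) (auto simp: frob4 dest: dvd_diffD1[rotated] ; presburger)




lemma FF_2: "FF $ (4*t+2) = psi 3 $ t"
  unfolding FF_eq fps_add_nth by (simp add: frob4 fps_X_power_mult_nth) (auto simp: frob4 dest: dvd_diffD1[rotated] ; presburger)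

lemma intfps_P: "intfps Pfps" "Pfps $ 0 = 1"
proof -
  have q0: "(qpoch 2 * qpoch 6) $ 0 = 1" by (simp add: qpoch_0)
  have i26: "intfps (qpoch 2 * qpoch 6)" by (intro intfps_mult intfps_qpoch)
  show "intfps Pfps" unfolding Pfps_def
    by (intro intfps_mult intfps_qpoch intfps_inverse[OF i26 q0])
  show "Pfps $ 0 = 1" unfolding Pfps_def using q0 by (simp add: qpoch_0)
qed

lemma red_P: "red Pfps = inverse (Ef 1 * Ef 3)"
proof -
  have q0: "(qpoch 2 * qpoch 6) $ 0 = 1" by (simp add: qpoch_0)
  have i26: "intfps (qpoch 2 * qpoch 6)" by (intro intfps_mult intfps_qpoch)
  have "red Pfps = Ef 1 * Ef 3 * inverse (Ef 2 * Ef 6)"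
    unfolding Pfps_def
    by (simp add: red_mult red_inverse[OF i26 q0] intfps_mult intfps_qpoch intfps_inverse[OF i26 q0] red_qpoch)
  also have "Ef 2 = Ef 1 ^ 2" using Ef_double[of 1] by simp
  also have "Ef 6 = Ef 3 ^ 2" using Ef_double[of 3] by simp
  finally have r: "red Pfps = Ef 1 * Ef 3 * inverse ((Ef 1 * Ef 3)^2)" by (simp add: power_mult_distrib)
  let ?U = "Ef 1 * Ef 3"
  have u0: "?U $ 0 \<noteq> 0" by (simp add: Ef0)
  have "inverse (?U^2) = inverse ?U ^ 2" by (rule fps_inverse_power)
  then have "?U * inverse (?U^2) = (?U * inverse ?U) * inverse ?U"
    by (simp only: power2_eq_square mult.assoc)
  also have "\<dots> = inverse ?U" using u0 by (simp add: inverse_mult_eq_1')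
  finally show ?thesis using r by simp
qed

lemma red_P6: "red (Pfps ^ 6) = FF ^ 2"
proof -
  have "red (Pfps ^ 6) = inverse (Ef 1 * Ef 3) ^ 6" using intfps_P by (simp add: red_power red_P)
  also have "\<dots> = inverse ((Ef 1 * Ef 3) ^ 6)" by (simp add: fps_inverse_power)
  also have "(Ef 1 * Ef 3) ^ 6 = ((Ef 1)^3 * (Ef 3)^3)^2"
    by (simp add: power_mult_distrib power_mult[symmetric])
  also have "\<dots> = (psi 1 * psi 3)^2" using jacobi2[of 1] jacobi2[of 3] by simp
  also have "inverse ((psi 1 * psi 3)^2) = FF^2" unfolding FF_def by (simp add: fps_inverse_power)
  finally show ?thesis .
qed

lemma red_P6_nth: "red (Pfps ^ 6) $ (2*M) = FF $ M"
  unfolding red_P6 frob by simp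

lemma bit_of_int_0: "(of_int a :: bit) = 0 \<Longrightarrow> even a"
proof -
  assume h: "(of_int a :: bit) = 0"
  have "a = 2*(a div 2) + a mod 2" by simp
  then have "(of_int a :: bit) = of_int (2*(a div 2)) + of_int (a mod 2)" by (metis of_int_add)
  also have "(of_int (2*(a div 2)) :: bit) = 0" by simp
  finally have "(of_int (a mod 2) :: bit) = 0" using h by simp
  moreover have "a mod 2 = 0 \<or> a mod 2 = 1" by presburger
  ultimately show "even a" by auto
qed

lemma odd_prod_int: "(\<And>i. i < (K::nat) \<Longrightarrow> odd (f i :: int)) \<Longrightarrow> odd (\<Prod>i<K. f i)"
  by (induct K) auto

lemma no_square:
  fixes q s w x :: int
  assumes "prime q" "\<not> q dvd w" "s \<noteq> 0"
  shows "s^2 * q * w \<noteq> x^2"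
proof
  assume e: "s^2 * q * w = x^2"
  have w0: "w \<noteq> 0" using assms(2) by auto
  have q0: "q \<noteq> 0" using assms(1) by auto
  have pe: "prime_elem q" using assms(1) by (rule prime_imp_prime_elem)
  have x0: "x \<noteq> 0" using e assms(3) w0 q0 by auto
  have "multiplicity q (s^2 * q * w) = 2 * multiplicity q s + 1 + 0"
    using pe assms w0 q0
    by (simp add: prime_elem_multiplicity_mult_distrib prime_elem_multiplicity_power_distrib not_dvd_imp_multiplicity_0)
  moreover have "multiplicity q (x^2) = 2 * multiplicity q x"
    using pe x0 by (simp add: prime_elem_multiplicity_power_distrib)
  ultimately have "2 * multiplicity q s + 1 = 2 * multiplicity q x" using e by simp
  then show False by presburger
qed




lemma q_not_dvd:
  fixes q j :: int and n :: nat
  assumes "prime q" "odd q" "\<not> q dvd j"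
  shows "\<not> q dvd (8*q*int n + 8*j + q)"
proof
  assume "q dvd (8*q*int n + 8*j + q)"
  then have "q dvd (8*q*int n + 8*j + q) - q*(8*int n + 1)" by simp
  then have "q dvd 8*j" by (simp add: algebra_simps)
  then have "q dvd 8 \<or> q dvd j" using assms(1) by (simp add: prime_dvd_mult_iff)
  then have "q dvd 2^3" using assms(3) by simp
  then have "q dvd 2" using assms(1) prime_dvd_power by blast
  moreover have "q \<ge> 2" using assms(1) by (simp add: prime_ge_2_int)
  ultimately have "q = 2" using zdvd_imp_le[of q 2] by simp
  then show False using assms(2) by simp
qed

theorem theorem1p2:
  fixes k n m :: nat and p :: "nat \<Rightarrow> nat" and j :: int
  assumes "m \<in> {0, 1}"
    and "\<And>i. i \<le> k \<Longrightarrow> prime (p i)"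
    and "\<And>i. i \<le> k \<Longrightarrow> p i mod 8 \<in> {3, 5, 7}"
    and "\<not> int (p k) dvd j"
  shows "\<exists>t::int. Jstar6 (3 ^ m * (\<Prod>i<k. int (p i) ^ 2) * int (p k)
            * (8 * int (p k) * int n + 8 * j + int (p k))) = 2 * of_int t"
proof -
  define s where "s = (\<Prod>i<k. int (p i))"
  define q where "q = int (p k)"
  define w where "w = 8*q*int n + 8*j + q"
  define N where "N = 3 ^ m * (\<Prod>i<k. int (p i) ^ 2) * int (p k) * (8 * int (p k) * int n + 8 * j + int (p k))"
  have oddp: "odd (p i)" if "i \<le> k" for i
  proof -
    have "p i mod 8 = 3 \<or> p i mod 8 = 5 \<or> p i mod 8 = 7" using assms(3)[OF that] by auto
    then show ?thesis by presburger
  qed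
  have S: "(\<Prod>i<k. int (p i) ^ 2) = s^2" unfolding s_def by (simp add: prod_power_distrib)
  have Nd: "N = 3^m * (s^2 * q * w)" unfolding N_def S q_def w_def by (simp add: ac_simps)
  have os: "odd s" unfolding s_def by (rule odd_prod_int) (use oddp in auto)
  have oq: "odd q" unfolding q_def using oddp[of k] by simp
  have pq: "prime q" unfolding q_def using assms(2)[of k] by simp
  have nq: "\<not> q dvd w" unfolding w_def using q_not_dvd[OF pq oq, of j n] assms(4) q_def by simp
  have s0: "s \<noteq> 0" using os by auto
  obtain a where a: "s^2 = 8*a+1" using odd_sq8[OF os] by blast
  obtain b where b: "q^2 = 8*b+1" using odd_sq8[OF oq] by blast
  define c where "c = q^2*int n + q*j + b"
  have qw0: "q*w = 8*(q^2*int n + q*j) + q^2" unfolding w_def by (simp add: algebra_simps power2_eq_square)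
  have qw: "q*w = 8*c+1" unfolding qw0 c_def b by (simp add: algebra_simps)
  define d where "d = 8*a*c + a + c"
  have sqw: "s^2 * q * w = 8*d+1" unfolding d_def using a qw
    by (simp add: mult.assoc) (simp add: algebra_simps)
  show ?thesis
  proof (cases "N < -1")
    case True
    then have "Jstar6 N = 0" by (simp add: Jstar6_def)
    then show ?thesis unfolding N_def by (intro exI[of _ 0]) simp
  next
    case False
    have d0: "0 \<le> d" using False assms(1) unfolding Nd sqw by auto
    have N1: "1 \<le> N" using d0 assms(1) unfolding Nd sqw by auto
    let ?P6 = "Pfps ^ 6" and ?I6 = "inverse Pfps ^ 6"
    have iP: "intfps ?P6" using intfps_P by (simp add: intfps_power)
    have iI: "intfps ?I6" using intfps_P by (simp add: intfps_power intfps_inverse)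
    define a1 where "a1 = \<lfloor>?P6 $ nat (N+1)\<rfloor>"
    define a2 where "a2 = \<lfloor>?I6 $ nat (N-1)\<rfloor>"
    have J: "Jstar6 N = of_int a1 + 64 * of_int a2"
      using N1 intfps_coeff[OF iP, of "nat (N+1)"] intfps_coeff[OF iI, of "nat (N-1)"]
      unfolding a1_def a2_def Jstar6_def by simp
    have red1: "red ?P6 $ nat (N+1) = of_int a1" unfolding a1_def red_nth ..
    have ntr: "\<not> tr (nat d)"
    proof
      assume "tr (nat d)"
      then obtain x where x: "x^2 = 8*d + 1" using tr_iff d0 by auto
      then have "s^2 * q * w = x^2" using sqw by simp
      then show False using no_square[OF pq nq s0] by blast
    qed
    have "red ?P6 $ nat (N+1) = 0"
    proof (cases "m = 0")
      case True
      then have e: "nat (N+1) = 2*(4*nat d + 1)" using Nd sqw d0 by simp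
      have "red ?P6 $ nat (N+1) = FF $ (4*nat d + 1)" unfolding e by (rule red_P6_nth)
      also have "\<dots> = psi 1 $ nat d" by (rule FF_1)
      finally show ?thesis using ntr by (simp add: psi_nth)
    next
      case False
      then have "m = 1" using assms(1) by simp
      then have e: "nat (N+1) = 2*(4*(3*nat d) + 2)" using Nd sqw d0 by simp
      have "red ?P6 $ nat (N+1) = FF $ (4*(3*nat d) + 2)" unfolding e by (rule red_P6_nth)
      also have "\<dots> = psi 3 $ (3*nat d)" by (rule FF_2)
      finally show ?thesis using ntr by (simp add: psi_nth)
    qed
    then have "even a1" using red1 bit_of_int_0 by simp
    then have "Jstar6 N = 2 * of_int (a1 div 2 + 32 * a2)" unfolding J by (auto elim!: evenE)
    then show ?thesis unfolding N_def by blast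
  qed
qed


end
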